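(* Let $f$ be a convex function on the $d\times d$ Hermitian matrices, differentiable at every non-singular $\rho\in\mathcal{D}$, and let $\tau\in(0,1)$. For every non-singular $\rho\in\mathcal{D}$ there exists $\alpha_\rho>0$ such that $$f(\rho(\alpha))\le f(\rho)+\tau\langle\nabla f(\rho),\rho(\alpha)-\rho\rangle\quad\text{for all }\alpha\in[0,\alpha_\rho].$$
   Context: $\mathcal{D}=\{\rho\in\mathbb{C}^{d\times d}:\rho\succeq0,\ \operatorname{tr}\rho=1\}$; $\langle A,B\rangle=\operatorname{tr}(A^{\mathrm H}B)$ and $\nabla f(\rho)$ is the Hermitian gradient w.r.t. this inner product. $\rho(\alpha):=\exp[\log\rho-\alpha\nabla f(\rho)]/\operatorname{tr}\exp[\log\rho-\alpha\nabla f(\rho)]$ (matrix exponential/logarithm), so $\rho(0)=\rho$. *)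

theory Defs
  imports "HOL-Analysis.Analysis"
begin

type_synonym 'n cmat = "complex^'n^'n"

definition adjoint_mat :: "'n::finite cmat \<Rightarrow> 'n cmat" where
  "adjoint_mat A = (\<chi> i j. cnj (A $ j $ i))"

definition hermitian :: "'n::finite cmat \<Rightarrow> bool" where
  "hermitian A \<longleftrightarrow> adjoint_mat A = A"

definition hs_inner :: "'n::finite cmat \<Rightarrow> 'n cmat \<Rightarrow> complex" where
  "hs_inner A B = trace (adjoint_mat A ** B)"

definition psd :: "'n::finite cmat \<Rightarrow> bool" where
  "psd A \<longleftrightarrow> hermitian A \<and> (\<forall>x::complex^'n. 0 \<le> Re (\<Sum>i\<in>UNIV. \<Sum>j\<in>UNIV. cnj (x $ i) * A $ i $ j * x $ j))"

definition density :: "'n::finite cmat set" where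
  "density = {\<rho>. psd \<rho> \<and> trace \<rho> = 1}"

primrec mpow :: "'n::finite cmat \<Rightarrow> nat \<Rightarrow> 'n cmat" where
  "mpow A 0 = mat 1"
| "mpow A (Suc k) = A ** mpow A k"

definition mexp :: "'n::finite cmat \<Rightarrow> 'n cmat" where
  "mexp A = (\<Sum>k. (1 / fact k) *\<^sub>R mpow A k)"

definition mlog :: "'n::finite cmat \<Rightarrow> 'n cmat" where
  "mlog A = (THE L. hermitian L \<and> mexp L = A)"

text \<open>The update rho(alpha) = exp[log rho - alpha G] / tr exp[log rho - alpha G], G the gradient.\<close>
definition eg_step :: "'n::finite cmat \<Rightarrow> 'n cmat \<Rightarrow> real \<Rightarrow> 'n cmat" where
  "eg_step G \<rho> \<alpha> = (let E = mexp (mlog \<rho> - \<alpha> *\<^sub>R G) in (\<chi> i j. E $ i $ j / trace E))"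

end

theory Submission
  imports Defs
begin


definition rdiag :: "('n::finite \<Rightarrow> real) \<Rightarrow> 'n cmat" where
  "rdiag d = (\<chi> i j. if i = j then complex_of_real (d i) else 0)"

definition unitary :: "'n::finite cmat \<Rightarrow> bool" where
  "unitary U \<longleftrightarrow> adjoint_mat U ** U = mat 1 \<and> U ** adjoint_mat U = mat 1"

lemma adj_nth[simp]: "adjoint_mat A $ i $ j = cnj (A $ j $ i)"
  by (simp add: adjoint_mat_def)

lemma mmult_nth: "(A ** B) $ i $ j = (\<Sum>k\<in>UNIV. A $ i $ k * B $ k $ j)"
  by (simp add: matrix_matrix_mult_def)

lemma adj_mul: "adjoint_mat (A ** B) = adjoint_mat B ** adjoint_mat (A::'n::finite cmat)"
  by (simp add: vec_eq_iff mmult_nth mult.commute)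

lemma adj_adj[simp]: "adjoint_mat (adjoint_mat A) = A"
  by (simp add: vec_eq_iff)

lemma adj_diff: "adjoint_mat (A - B) = adjoint_mat A - adjoint_mat (B::'n::finite cmat)"
  by (simp add: vec_eq_iff)

lemma adj_add: "adjoint_mat (A + B) = adjoint_mat A + adjoint_mat (B::'n::finite cmat)"
  by (simp add: vec_eq_iff)

lemma adj_scaleR: "adjoint_mat (c *\<^sub>R A) = c *\<^sub>R adjoint_mat (A::'n::finite cmat)"
  by (simp add: vec_eq_iff complex_cnj_scaleR)

lemma adj_mat1[simp]: "adjoint_mat (mat 1 :: 'n::finite cmat) = mat 1"
  by (simp add: vec_eq_iff mat_def)

lemma rdiag_nth[simp]: "rdiag d $ i $ j = (if i = j then complex_of_real (d i) else 0)"
  by (simp add: rdiag_def)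

lemma adj_rdiag[simp]: "adjoint_mat (rdiag d) = rdiag d"
  by (simp add: vec_eq_iff)

lemma rdiag_mult_left: "(rdiag d ** B) $ i $ j = d i * B $ i $ j"
proof -
  have "(rdiag d ** B) $ i $ j = (\<Sum>k\<in>UNIV. if k = i then complex_of_real (d i) * B $ i $ j else 0)"
    unfolding mmult_nth by (rule sum.cong) auto
  then show ?thesis by simp
qed

lemma rdiag_mult_right: "(B ** rdiag d) $ i $ j = B $ i $ j * d j"
proof -
  have "(B ** rdiag d) $ i $ j = (\<Sum>k\<in>UNIV. if k = j then B $ i $ j * complex_of_real (d j) else 0)"
    unfolding mmult_nth by (rule sum.cong) auto
  then show ?thesis by simp
qed

lemma rdiag_mult: "rdiag a ** rdiag b = rdiag (\<lambda>i. a i * b i)"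
  by (simp add: vec_eq_iff rdiag_mult_left)

lemma hermitian_conj: "hermitian (U ** rdiag d ** adjoint_mat U)"
  unfolding hermitian_def by (simp add: adj_mul matrix_mul_assoc)

lemma trace_nth: "trace A = (\<Sum>i\<in>UNIV. A $ i $ i)"
  by (simp add: trace_def)

lemma re_hs_inner: "Re (hs_inner A B) = A \<bullet> B"
  unfolding hs_inner_def trace_nth mmult_nth inner_vec_def inner_complex_def Re_sum
  by (subst sum.swap) simp



definition cinner :: "complex^'n::finite \<Rightarrow> complex^'n \<Rightarrow> complex" where
  "cinner x y = (\<Sum>i\<in>UNIV. cnj (x $ i) * y $ i)"

lemma re_cinner: "Re (cinner x y) = x \<bullet> y"
  by (simp add: cinner_def inner_vec_def inner_complex_def Re_sum)

lemma mv_nth: "(A *v x) $ i = (\<Sum>j\<in>UNIV. A $ i $ j * x $ j)"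
  by (simp add: matrix_vector_mult_def)

lemma sc_nth: "(c *\<^sub>R x) $ i = complex_of_real c * (x $ i :: complex)"
  unfolding vector_scaleR_component by (simp add: scaleR_conv_of_real)

lemma mv_add: "(A::'n::finite cmat) *v (x + y) = A *v x + A *v y"
  by (simp add: vec_eq_iff mv_nth distrib_left sum.distrib)

lemma mv_scaleR: "(A::'n::finite cmat) *v (c *\<^sub>R x) = c *\<^sub>R (A *v x)"
  by (simp add: vec_eq_iff mv_nth sc_nth sum_distrib_left mult.left_commute del: vector_scaleR_component)

lemma mv_diff: "(A::'n::finite cmat) *v (x - y) = A *v x - A *v y"
  by (simp add: vec_eq_iff mv_nth right_diff_distrib sum_subtractf)

lemma cinner_herm:
  assumes "hermitian A"
  shows "cinner (A *v x) y = cinner x (A *v y)"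
proof -
  have A: "\<And>i j. cnj (A $ i $ j) = A $ j $ i"
    using assms unfolding hermitian_def by (metis adj_nth)
  have "cinner (A *v x) y = (\<Sum>i\<in>UNIV. \<Sum>j\<in>UNIV. cnj (A $ i $ j) * cnj (x $ j) * y $ i)"
    by (simp add: cinner_def mv_nth sum_distrib_right)
  also have "\<dots> = (\<Sum>j\<in>UNIV. \<Sum>i\<in>UNIV. cnj (A $ i $ j) * cnj (x $ j) * y $ i)"
    by (rule sum.swap)
  also have "\<dots> = cinner x (A *v y)"
    by (simp add: cinner_def mv_nth sum_distrib_left A mult.assoc mult.left_commute)
  finally show ?thesis .
qed

lemma inner_herm:
  assumes "hermitian A"
  shows "(A *v x) \<bullet> y = x \<bullet> (A *v y)"
  using cinner_herm[OF assms] by (metis re_cinner)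

lemma cinner_scaleR_left: "cinner (c *\<^sub>R x) y = c * cinner x y"
  by (simp add: cinner_def sum_distrib_left sc_nth mult.assoc del: vector_scaleR_component)

lemma cinner_add_right: "cinner x (y + z) = cinner x y + cinner x z"
  by (simp add: cinner_def distrib_left sum.distrib)

lemma cinner_scaleR_right: "cinner x (c *\<^sub>R y) = c * cinner x y"
  by (simp add: cinner_def sum_distrib_left sc_nth mult.left_commute del: vector_scaleR_component)

lemma cinner_diff_right: "cinner x (y - z) = cinner x y - cinner x z"
  by (simp add: cinner_def right_diff_distrib sum_subtractf)

lemma cinner_self: "cinner x x = complex_of_real ((norm x)^2)"
proof -
  have "cinner x x = (\<Sum>i\<in>UNIV. complex_of_real ((cmod (x $ i))^2))"
    unfolding cinner_def by (rule sum.cong) (auto simp: complex_norm_square[symmetric] mult.commute)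
  also have "\<dots> = complex_of_real (\<Sum>i\<in>UNIV. (cmod (x $ i))^2)" by simp
  also have "(\<Sum>i\<in>UNIV. (cmod (x $ i))^2) = (norm x)^2"
    unfolding norm_vec_def L2_set_def by (subst real_sqrt_pow2) (auto intro: sum_nonneg)
  finally show ?thesis .
qed

lemma cinner_ii: "Re (cinner (\<chi> i. \<i> * v $ i) x) = Im (cinner v x)"
  by (simp add: cinner_def sum_distrib_left Re_sum Im_sum mult.assoc)

lemma quad_zero:
  fixes a b :: real
  assumes "\<And>t. a * t + b * t^2 \<le> 0"
  shows "a = 0"
proof (rule ccontr)
  assume "a \<noteq> 0"
  define c where "c = \<bar>b\<bar> + 1"
  have c0: "c > 0" unfolding c_def by simp
  define t where "t = a / (2 * c)"
  have aa: "a * a > 0" using \<open>a \<noteq> 0\<close> by (simp add: zero_less_mult_iff) (smt (verit))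
  have "a * t = (a * a) / (2 * c)" unfolding t_def by simp
  also have "\<dots> > 0" using aa c0 by (intro divide_pos_pos) auto
  finally have tp: "a * t > 0" .
  have "\<bar>b * t^2\<bar> \<le> c * t^2" unfolding c_def by (simp add: abs_mult) (intro mult_right_mono, auto)
  also have "\<dots> = a * t / 2" unfolding t_def using c0 by (simp add: power2_eq_square field_simps)
  finally have "\<bar>b * t^2\<bar> < a * t" using tp by linarith
  with assms[of t] show False by linarith
qed

definition eigenset :: "'n::finite cmat \<Rightarrow> (complex^'n) set \<Rightarrow> bool" where
  "eigenset A S \<longleftrightarrow> finite S \<and> (\<forall>v\<in>S. norm v = 1 \<and> (\<exists>l::real. A *v v = l *\<^sub>R v))
     \<and> (\<forall>v\<in>S. \<forall>w\<in>S. v \<noteq> w \<longrightarrow> cinner v w = 0)"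

lemma eigen_extend:
  fixes A :: "'n::finite cmat"
  assumes herm: "hermitian A" and ES: "eigenset A S" and card: "card S < CARD('n)"
  shows "\<exists>u. u \<notin> S \<and> eigenset A (insert u S)"
proof -
  have finS: "finite S" using ES eigenset_def by blast
  define W where "W = {x. \<forall>v\<in>S. cinner v x = 0}"
  define iS where "iS = (\<lambda>v. (\<chi> i. \<i> * v $ i) :: complex^'n) ` S"
  have "dim (S \<union> iS) \<le> card (S \<union> iS)" using finS iS_def by (intro dim_le_card') auto
  also have "\<dots> \<le> card S + card iS" by (rule card_Un_le)
  also have "card iS \<le> card S" unfolding iS_def by (rule card_image_le[OF finS])
  finally have "dim (S \<union> iS) < DIM(complex^'n)" using card by simp
  then obtain x where x0: "x \<noteq> 0" and xo: "\<And>y. y \<in> span (S \<union> iS) \<Longrightarrow> orthogonal x y"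
    using orthogonal_to_subspace_exists by blast
  have xW: "x \<in> W"
  proof -
    { fix v assume v: "v \<in> S"
      have "orthogonal x v" using v by (intro xo span_base) auto
      hence "Re (cinner v x) = 0" by (simp add: re_cinner orthogonal_def inner_commute)
      moreover have "orthogonal x (\<chi> i. \<i> * v $ i)" using v by (intro xo span_base) (auto simp: iS_def)
      hence "Im (cinner v x) = 0" by (simp add: cinner_ii[symmetric] re_cinner orthogonal_def inner_commute)
      ultimately have "cinner v x = 0" by (simp add: complex_eq_iff) }
    then show ?thesis unfolding W_def by auto
  qed
  have Wsub: "\<And>y z c. y \<in> W \<Longrightarrow> z \<in> W \<Longrightarrow> y + c *\<^sub>R z \<in> W"
    unfolding W_def by (simp add: cinner_add_right cinner_scaleR_right)
  have Wsc: "\<And>z c. z \<in> W \<Longrightarrow> c *\<^sub>R z \<in> W"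
    unfolding W_def by (simp add: cinner_scaleR_right)
  have WA: "\<And>z. z \<in> W \<Longrightarrow> A *v z \<in> W"
  proof -
    fix z assume z: "z \<in> W"
    { fix v assume v: "v \<in> S"
      then obtain l where l: "A *v v = l *\<^sub>R v" using ES eigenset_def by blast
      have "cinner v (A *v z) = cinner (A *v v) z" by (simp add: cinner_herm[OF herm])
      also have "\<dots> = 0" using z v by (simp add: l cinner_scaleR_left W_def)
      finally have "cinner v (A *v z) = 0" . }
    then show "A *v z \<in> W" unfolding W_def by auto
  qed
  define K where "K = sphere 0 1 \<inter> W"
  have Wclosed: "closed W"
  proof -
    have "W = (\<Inter>v\<in>S. {x. cinner v x = 0})" unfolding W_def by auto
    moreover have "closed {x. cinner v x = 0}" for v :: "complex^'n"
      unfolding cinner_def by (intro closed_Collect_eq continuous_intros)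
    ultimately show ?thesis by auto
  qed
  have Kc: "compact K" unfolding K_def
    by (intro compact_Int_closed compact_sphere Wclosed)
  have Kne: "K \<noteq> {}"
  proof -
    have "(1 / norm x) *\<^sub>R x \<in> K" using x0 xW Wsc unfolding K_def by auto
    thus ?thesis by auto
  qed
  define q where "q = (\<lambda>y::complex^'n. y \<bullet> (A *v y))"
  have qc: "continuous_on K q" unfolding q_def mv_nth[abs_def] matrix_vector_mult_def
    by (intro continuous_intros continuous_on_vec_lambda)
  obtain u where uK: "u \<in> K" and umax: "\<And>y. y \<in> K \<Longrightarrow> q y \<le> q u"
    using continuous_attains_sup[OF Kc Kne qc] by blast
  define mu where "mu = q u"
  have uW: "u \<in> W" and un: "norm u = 1" using uK K_def by auto
  have qscale: "q (c *\<^sub>R y) = c^2 * q y" for c y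
    unfolding q_def by (simp add: mv_scaleR power2_eq_square)
  have qle: "q y \<le> mu * (norm y)^2" if "y \<in> W" for y
  proof (cases "y = 0")
    case True thus ?thesis by (simp add: q_def)
  next
    case False
    have "(1 / norm y) *\<^sub>R y \<in> K" using False that Wsc unfolding K_def by auto
    hence "q ((1 / norm y) *\<^sub>R y) \<le> mu" using umax mu_def by blast
    hence "(1 / norm y)^2 * q y \<le> mu" by (simp add: qscale)
    thus ?thesis using False by (simp add: field_simps power2_eq_square)
  qed
  define z where "z = A *v u - mu *\<^sub>R u"
  have zW: "z \<in> W" unfolding z_def using Wsub[OF WA[OF uW] uW, of "- mu"] by simp
  have key: "\<And>w. w \<in> W \<Longrightarrow> w \<bullet> z = 0"
  proof -
    fix w assume w: "w \<in> W"
    have "\<And>t. (2 * (w \<bullet> z)) * t + (q w - mu * (norm w)^2) * t^2 \<le> 0"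
    proof -
      fix t :: real
      have "q (u + t *\<^sub>R w) \<le> mu * (norm (u + t *\<^sub>R w))^2" using qle Wsub[OF uW w] by blast
      moreover have "q (u + t *\<^sub>R w) = q u + 2 * t * (w \<bullet> (A *v u)) + t^2 * q w"
        unfolding q_def using inner_herm[OF herm, of w u]
        by (simp add: mv_add mv_scaleR inner_add_left inner_add_right power2_eq_square inner_commute algebra_simps)
      moreover have "(norm (u + t *\<^sub>R w))^2 = 1 + 2 * t * (w \<bullet> u) + t^2 * (norm w)^2"
      proof -
        have uu: "u \<bullet> u = 1" using un by (metis power2_norm_eq_inner one_power2)
        show ?thesis unfolding power2_norm_eq_inner
          by (simp add: inner_add_left inner_add_right inner_commute uu power2_eq_square algebra_simps)
      qed
      ultimately show "(2 * (w \<bullet> z)) * t + (q w - mu * (norm w)^2) * t^2 \<le> 0"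
        unfolding z_def mu_def by (simp add: inner_diff_right algebra_simps)
    qed
    from quad_zero[OF this] show "w \<bullet> z = 0" by simp
  qed
  have "z = 0" using key[OF zW] by simp
  hence Au: "A *v u = mu *\<^sub>R u" unfolding z_def by simp
  have uS: "u \<notin> S"
  proof
    assume "u \<in> S"
    hence "cinner u u = 0" using uW W_def by auto
    thus False using un by (simp add: cinner_self)
  qed
  have h1: "\<forall>v\<in>insert u S. norm v = 1 \<and> (\<exists>l::real. A *v v = l *\<^sub>R v)"
    using un Au ES eigenset_def by auto
  have h2: "\<forall>v\<in>insert u S. \<forall>w\<in>insert u S. v \<noteq> w \<longrightarrow> cinner v w = 0"
  proof (intro ballI impI)
    fix v w assume v: "v \<in> insert u S" and w: "w \<in> insert u S" and vw: "v \<noteq> w"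
    show "cinner v w = 0"
    proof (cases "v = u")
      case True
      hence "w \<in> S" using w vw by auto
      hence "cinner w u = 0" using uW W_def by auto
      hence "cnj (cinner w u) = 0" by simp
      moreover have "cnj (cinner w u) = cinner u w" by (simp add: cinner_def mult.commute)
      ultimately show ?thesis using True by simp
    next
      case False
      hence vS: "v \<in> S" using v by auto
      show ?thesis
      proof (cases "w = u")
        case True thus ?thesis using vS uW W_def by auto
      next
        case False thus ?thesis using vS w vw ES unfolding eigenset_def by auto
      qed
    qed
  qed
  have "eigenset A (insert u S)" unfolding eigenset_def using finS h1 h2 by blast
  thus ?thesis using uS by blast
qed



lemma eigenset_exists:
  fixes A :: "'n::finite cmat"
  assumes herm: "hermitian A"
  shows "k \<le> CARD('n) \<Longrightarrow> \<exists>S. eigenset A S \<and> card S = k"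
proof (induction k)
  case 0
  have "eigenset A {}" by (simp add: eigenset_def)
  thus ?case by force
next
  case (Suc k)
  then obtain S where S: "eigenset A S" "card S = k" by auto
  with Suc.prems have "card S < CARD('n)" by simp
  from eigen_extend[OF herm S(1) this] obtain u where u: "u \<notin> S" "eigenset A (insert u S)" by blast
  have "finite S" using S eigenset_def by blast
  hence "card (insert u S) = Suc k" using u S by simp
  thus ?case using u by blast
qed

lemma spectral:
  fixes A :: "'n::finite cmat"
  assumes herm: "hermitian A"
  shows "\<exists>U d. unitary U \<and> A = U ** rdiag d ** adjoint_mat U"
proof -
  obtain S where S: "eigenset A S" "card S = CARD('n)" using eigenset_exists[OF herm] by blast
  have finS: "finite S" using S eigenset_def by blast
  obtain e where e: "bij_betw e (UNIV::'n set) S"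
    using finite_same_card_bij[of "UNIV::'n set" S] finS S by auto
  have eS: "e j \<in> S" for j using e bij_betwE by blast
  have einj: "e j = e k \<Longrightarrow> j = k" for j k using e by (metis bij_betw_imp_inj_on inj_on_def UNIV_I)
  define U :: "'n cmat" where "U = (\<chi> i j. e j $ i)"
  define d where "d = (\<lambda>j. SOME l::real. A *v e j = l *\<^sub>R e j)"
  have ed: "A *v e j = d j *\<^sub>R e j" for j
  proof -
    have "\<exists>l::real. A *v e j = l *\<^sub>R e j" using S eS eigenset_def by blast
    thus ?thesis unfolding d_def by (rule someI_ex)
  qed
  have UU: "adjoint_mat U ** U = mat 1"
  proof -
    have "(adjoint_mat U ** U) $ j $ k = mat 1 $ j $ k" for j k
    proof -
      have "(adjoint_mat U ** U) $ j $ k = cinner (e j) (e k)"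
        by (simp add: mmult_nth U_def cinner_def)
      also have "\<dots> = (if j = k then 1 else 0)"
      proof (cases "j = k")
        case True
        have "norm (e j) = 1" using S eS eigenset_def by blast
        thus ?thesis using True by (simp add: cinner_self)
      next
        case False
        hence "e j \<noteq> e k" using einj by blast
        thus ?thesis using False S eS unfolding eigenset_def by auto
      qed
      finally show ?thesis by (simp add: mat_def)
    qed
    thus ?thesis by (simp add: vec_eq_iff)
  qed
  hence UU': "U ** adjoint_mat U = mat 1" using matrix_left_right_inverse by blast
  have AU: "A ** U = U ** rdiag d"
  proof -
    have "(A ** U) $ i $ j = (U ** rdiag d) $ i $ j" for i j
    proof -
      have "(A ** U) $ i $ j = (A *v e j) $ i" by (simp add: mmult_nth mv_nth U_def)
      also have "\<dots> = complex_of_real (d j) * e j $ i" by (simp add: ed sc_nth del: vector_scaleR_component)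
      finally show ?thesis by (simp add: rdiag_mult_right U_def mult.commute)
    qed
    thus ?thesis by (simp add: vec_eq_iff)
  qed
  have "A = A ** (U ** adjoint_mat U)" by (simp add: UU')
  also have "\<dots> = U ** rdiag d ** adjoint_mat U" by (metis matrix_mul_assoc AU)
  finally show ?thesis using UU UU' unitary_def by blast
qed



lemma conj_nth: "(U ** rdiag d ** adjoint_mat U) $ i $ j = (\<Sum>l\<in>UNIV. U $ i $ l * complex_of_real (d l) * cnj (U $ j $ l))"
  by (subst mmult_nth) (simp add: rdiag_mult_right)

lemma sc_nth2: "(c *\<^sub>R M) $ i $ j = complex_of_real c * (M $ i $ j :: complex)"
  by (simp only: vector_scaleR_component) (simp add: scaleR_conv_of_real)

lemma mat1_rdiag: "(mat 1 :: 'n::finite cmat) = rdiag (\<lambda>_. 1)"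
  by (simp add: vec_eq_iff mat_def)

lemma mpow_rdiag: "mpow (rdiag d) k = rdiag (\<lambda>i. d i ^ k)"
  by (induction k) (simp_all add: mat1_rdiag rdiag_mult)

lemma mpow_conj:
  assumes "unitary U"
  shows "mpow (U ** D ** adjoint_mat U) k = U ** mpow D k ** adjoint_mat U"
proof (induction k)
  case 0
  then show ?case using assms by (simp add: unitary_def)
next
  case (Suc k)
  have "mpow (U ** D ** adjoint_mat U) (Suc k) = U ** D ** (adjoint_mat U ** U) ** mpow D k ** adjoint_mat U"
    by (simp add: Suc matrix_mul_assoc)
  also have "\<dots> = U ** mpow D (Suc k) ** adjoint_mat U"
    using assms by (simp add: unitary_def matrix_mul_assoc)
  finally show ?case .
qed

lemma sums_mat_entry:
  fixes f :: "nat \<Rightarrow> 'n::finite cmat"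
  assumes "\<And>i j. (\<lambda>k. f k $ i $ j) sums (c i j)"
  shows "f sums (\<chi> i j. c i j)"
  using assms unfolding sums_def
  by (intro vec_tendstoI) (simp add: sum_component vec_tendstoI)

lemma mexp_conj:
  assumes U: "unitary U"
  shows "mexp (U ** rdiag d ** adjoint_mat U) = U ** rdiag (\<lambda>i. exp (d i)) ** adjoint_mat U"
proof -
  have "(\<lambda>k. (1 / fact k) *\<^sub>R mpow (U ** rdiag d ** adjoint_mat U) k) sums (U ** rdiag (\<lambda>i. exp (d i)) ** adjoint_mat U)"
  proof -
    have "(\<lambda>k. ((1 / fact k) *\<^sub>R mpow (U ** rdiag d ** adjoint_mat U) k) $ i $ j) sums ((U ** rdiag (\<lambda>i. exp (d i)) ** adjoint_mat U) $ i $ j)" for i j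
    proof -
      have e: "(\<lambda>k. complex_of_real (d l ^ k / fact k)) sums complex_of_real (exp (d l))" for l
        using sums_of_real[OF exp_converges[of "d l"]] by (simp only: real_scaleR_def divide_inverse mult.commute)
      have "(\<lambda>k. \<Sum>l\<in>UNIV. U $ i $ l * cnj (U $ j $ l) * complex_of_real (d l ^ k / fact k))
            sums (\<Sum>l\<in>UNIV. U $ i $ l * cnj (U $ j $ l) * complex_of_real (exp (d l)))"
        by (intro sums_sum sums_mult e)
      moreover have "((1 / fact k) *\<^sub>R mpow (U ** rdiag d ** adjoint_mat U) k) $ i $ j
          = (\<Sum>l\<in>UNIV. U $ i $ l * cnj (U $ j $ l) * complex_of_real (d l ^ k / fact k))" for k
        by (simp add: mpow_conj[OF U] mpow_rdiag conj_nth sc_nth2 sum_distrib_left mult_ac del: vector_scaleR_component)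
      ultimately show ?thesis by (simp add: conj_nth mult_ac)
    qed
    thus ?thesis using sums_mat_entry[where c = "\<lambda>i j. (U ** rdiag (\<lambda>i. exp (d i)) ** adjoint_mat U) $ i $ j"]
      by (simp add: vec_lambda_eta)
  qed
  thus ?thesis unfolding mexp_def by (rule sums_unique[symmetric])
qed



lemma unitaryD: "unitary U \<Longrightarrow> adjoint_mat U ** U = mat 1" "unitary U \<Longrightarrow> U ** adjoint_mat U = mat 1"
  by (auto simp: unitary_def)

lemma unitary_cancel:
  assumes "unitary V"
  shows "adjoint_mat V ** (V ** X) = X" "V ** (adjoint_mat V ** X) = X"
  using assms by (simp_all add: unitary_def matrix_mul_assoc)

lemma fc_indep:
  assumes U: "unitary U" and V: "unitary V"
    and eq: "V ** rdiag a ** adjoint_mat V = U ** rdiag b ** adjoint_mat U"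
  shows "V ** rdiag (\<lambda>i. g (a i)) ** adjoint_mat V = U ** rdiag (\<lambda>i. g (b i)) ** adjoint_mat U"
proof -
  define W where "W = adjoint_mat U ** V"
  have "W ** rdiag a = adjoint_mat U ** (V ** rdiag a ** adjoint_mat V) ** V"
    unfolding W_def by (simp add: unitaryD[OF V] unitary_cancel[OF V] flip: matrix_mul_assoc)
  also have "\<dots> = rdiag b ** W"
    unfolding eq W_def by (simp add: unitaryD[OF U] unitary_cancel[OF U] flip: matrix_mul_assoc)
  finally have Wab: "W ** rdiag a = rdiag b ** W" .
  have "W ** rdiag (\<lambda>i. g (a i)) = rdiag (\<lambda>i. g (b i)) ** W"
  proof -
    have "(W ** rdiag (\<lambda>i. g (a i))) $ i $ j = (rdiag (\<lambda>i. g (b i)) ** W) $ i $ j" for i j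
    proof -
      have "W $ i $ j * a j = b i * W $ i $ j"
        using arg_cong[OF Wab, of "\<lambda>M. M $ i $ j"] by (simp add: rdiag_mult_left rdiag_mult_right)
      hence "W $ i $ j = 0 \<or> a j = b i" by (simp add: mult.commute)
      thus ?thesis by (auto simp: rdiag_mult_left rdiag_mult_right mult.commute)
    qed
    thus ?thesis by (simp add: vec_eq_iff)
  qed
  hence "U ** (W ** rdiag (\<lambda>i. g (a i))) ** adjoint_mat V = U ** (rdiag (\<lambda>i. g (b i)) ** W) ** adjoint_mat V"
    by simp
  moreover have "U ** (W ** rdiag (\<lambda>i. g (a i))) ** adjoint_mat V = V ** rdiag (\<lambda>i. g (a i)) ** adjoint_mat V"
    unfolding W_def by (simp add: unitaryD[OF U] unitary_cancel[OF U] flip: matrix_mul_assoc)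
  moreover have "U ** (rdiag (\<lambda>i. g (b i)) ** W) ** adjoint_mat V = U ** rdiag (\<lambda>i. g (b i)) ** adjoint_mat U"
    unfolding W_def by (simp add: unitaryD[OF V] unitary_cancel[OF V] flip: matrix_mul_assoc)
  ultimately show ?thesis by simp
qed

lemma mlog_eq:
  assumes U: "unitary U" and p: "\<And>i. p i > 0"
  shows "mlog (U ** rdiag p ** adjoint_mat U) = U ** rdiag (\<lambda>i. ln (p i)) ** adjoint_mat U"
  unfolding mlog_def
proof (rule the_equality)
  show "hermitian (U ** rdiag (\<lambda>i. ln (p i)) ** adjoint_mat U) \<and>
    mexp (U ** rdiag (\<lambda>i. ln (p i)) ** adjoint_mat U) = U ** rdiag p ** adjoint_mat U"
    using p by (simp add: hermitian_conj mexp_conj[OF U])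
next
  fix L assume L: "hermitian L \<and> mexp L = U ** rdiag p ** adjoint_mat U"
  then obtain V mu where V: "unitary V" and Lv: "L = V ** rdiag mu ** adjoint_mat V"
    using spectral by blast
  have "V ** rdiag (\<lambda>i. exp (mu i)) ** adjoint_mat V = U ** rdiag p ** adjoint_mat U"
    using L Lv mexp_conj[OF V] by simp
  from fc_indep[OF U V this, of ln] show "L = U ** rdiag (\<lambda>i. ln (p i)) ** adjoint_mat U"
    using Lv by simp
qed

lemma trace_conj:
  assumes V: "unitary V"
  shows "trace (V ** rdiag e ** adjoint_mat V) = complex_of_real (\<Sum>i\<in>UNIV. e i)"
proof -
  have "trace (V ** rdiag e ** adjoint_mat V) = trace (adjoint_mat V ** (V ** rdiag e))"
    by (rule trace_mul_sym)
  also have "\<dots> = trace (rdiag e)" by (simp add: unitary_cancel[OF V])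
  finally show ?thesis by (simp add: trace_nth)
qed

lemma eg_step_form:
  assumes G: "hermitian G" and U: "unitary U" and p: "\<And>i. p i > 0"
  shows "\<exists>V mu. unitary V \<and> U ** rdiag (\<lambda>i. ln (p i)) ** adjoint_mat U - \<alpha> *\<^sub>R G = V ** rdiag mu ** adjoint_mat V \<and>
     eg_step G (U ** rdiag p ** adjoint_mat U) \<alpha> = V ** rdiag (\<lambda>i. exp (mu i) / (\<Sum>j\<in>UNIV. exp (mu j))) ** adjoint_mat V"
proof -
  define M where "M = U ** rdiag (\<lambda>i. ln (p i)) ** adjoint_mat U - \<alpha> *\<^sub>R G"
  have "hermitian M" using G unfolding M_def hermitian_def
    by (simp add: adj_diff adj_scaleR adj_mul matrix_mul_assoc)
  then obtain V mu where V: "unitary V" and Mv: "M = V ** rdiag mu ** adjoint_mat V"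
    using spectral by blast
  define Z where "Z = (\<Sum>j\<in>UNIV. exp (mu j))"
  have E: "mexp M = V ** rdiag (\<lambda>i. exp (mu i)) ** adjoint_mat V" using Mv mexp_conj[OF V] by simp
  have tr: "trace (mexp M) = complex_of_real Z" unfolding E Z_def by (rule trace_conj[OF V])
  have "eg_step G (U ** rdiag p ** adjoint_mat U) \<alpha> = V ** rdiag (\<lambda>i. exp (mu i) / Z) ** adjoint_mat V"
    unfolding eg_step_def mlog_eq[OF U p] M_def[symmetric] Let_def tr
    by (simp add: vec_eq_iff E conj_nth sum_divide_distrib)
  thus ?thesis using V Mv unfolding M_def Z_def by blast
qed



lemma mm_diff_left: "(A::'n::finite cmat) ** (B - C) = A ** B - A ** C"
  by (simp add: vec_eq_iff mmult_nth right_diff_distrib sum_subtractf)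

lemma mm_diff_right: "((A::'n::finite cmat) - B) ** C = A ** C - B ** C"
  by (simp add: vec_eq_iff mmult_nth left_diff_distrib sum_subtractf)

lemma mm_scaleR_left: "(A::'n::finite cmat) ** (c *\<^sub>R B) = c *\<^sub>R (A ** B)"
  by (simp add: vec_eq_iff mmult_nth sc_nth2 sum_distrib_left mult_ac del: vector_scaleR_component)

lemma mm_scaleR_right: "(c *\<^sub>R (A::'n::finite cmat)) ** B = c *\<^sub>R (A ** B)"
  by (simp add: vec_eq_iff mmult_nth sc_nth2 sum_distrib_left mult_ac del: vector_scaleR_component)

lemma inner_conj:
  fixes U V X Y :: "'n::finite cmat"
  assumes U: "unitary U" and V: "unitary V"
  shows "(V ** X ** adjoint_mat U) \<bullet> (V ** Y ** adjoint_mat U) = X \<bullet> Y"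
proof -
  have "hs_inner (V ** X ** adjoint_mat U) (V ** Y ** adjoint_mat U)
      = trace (U ** (adjoint_mat X ** Y ** adjoint_mat U))"
    unfolding hs_inner_def adj_mul
    by (simp add: unitary_cancel[OF V] flip: matrix_mul_assoc)
  also have "\<dots> = trace ((adjoint_mat X ** Y ** adjoint_mat U) ** U)" by (rule trace_mul_sym)
  also have "\<dots> = hs_inner X Y" unfolding hs_inner_def by (simp add: unitaryD[OF U] flip: matrix_mul_assoc)
  finally show ?thesis by (metis re_hs_inner)
qed

definition wgt :: "'n::finite cmat \<Rightarrow> 'n cmat \<Rightarrow> 'n \<Rightarrow> 'n \<Rightarrow> real" where
  "wgt V U i j = (cmod ((adjoint_mat V ** U) $ i $ j))^2"

lemma wgt_nonneg: "wgt V U i j \<ge> 0" by (simp add: wgt_def)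

lemma mixed_inner:
  assumes U: "unitary U" and V: "unitary V"
  shows "(V ** rdiag a ** adjoint_mat V - U ** rdiag b ** adjoint_mat U) \<bullet>
         (V ** rdiag c ** adjoint_mat V - U ** rdiag d ** adjoint_mat U)
       = (\<Sum>i\<in>UNIV. \<Sum>j\<in>UNIV. wgt V U i j * ((a i - b j) * (c i - d j)))"
proof -
  define W where "W = adjoint_mat V ** U"
  have dec: "V ** rdiag x ** adjoint_mat V - U ** rdiag y ** adjoint_mat U
           = V ** (rdiag x ** W - W ** rdiag y) ** adjoint_mat U" for x y
    unfolding W_def mm_diff_left mm_diff_right
    by (simp add: unitaryD[OF U] unitary_cancel[OF V] flip: matrix_mul_assoc)
  have ent: "(rdiag x ** W - W ** rdiag y) $ i $ j = complex_of_real (x i - y j) * W $ i $ j" for x y i j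
    by (simp add: rdiag_mult_left rdiag_mult_right algebra_simps)
  have ci: "(complex_of_real r * z) \<bullet> (complex_of_real s * z) = r * s * (cmod z)^2" for r s z
    unfolding inner_complex_def cmod_power2 by (simp add: power2_eq_square algebra_simps)
  show ?thesis
    unfolding dec inner_conj[OF U V] unfolding inner_vec_def unfolding ent ci unfolding wgt_def W_def
    by (intro sum.cong refl) (simp add: mult_ac)
qed

lemma norm_sq_inner: "(norm (x::'n::finite cmat))^2 = x \<bullet> x"
  by (simp add: power2_norm_eq_inner)

lemma mat1_conj: "unitary V \<Longrightarrow> mat 1 = V ** rdiag (\<lambda>_. 1) ** adjoint_mat V"
  by (simp add: mat1_rdiag[symmetric] unitaryD)

lemma inner_mat1: "mat 1 \<bullet> (X::'n::finite cmat) = Re (trace X)"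
  by (simp add: re_hs_inner[symmetric] hs_inner_def)

lemma cnorm: "z * cnj z = complex_of_real ((cmod z)^2)"
  by (rule complex_norm_square[symmetric])

lemma diag_entry:
  assumes U: "unitary U" and V: "unitary V"
  shows "(adjoint_mat V ** (U ** rdiag d ** adjoint_mat U) ** V) $ i $ i
       = complex_of_real (\<Sum>l\<in>UNIV. wgt V U i l * d l)"
proof -
  define W where "W = adjoint_mat V ** U"
  have "adjoint_mat V ** (U ** rdiag d ** adjoint_mat U) ** V = W ** rdiag d ** adjoint_mat W"
    unfolding W_def adj_mul by (simp add: matrix_mul_assoc)
  also have "\<dots> $ i $ i = (\<Sum>l\<in>UNIV. W $ i $ l * complex_of_real (d l) * cnj (W $ i $ l))"
    by (rule conj_nth)
  also have t: "\<And>l. W $ i $ l * complex_of_real (d l) * cnj (W $ i $ l) = complex_of_real (wgt V U i l * d l)"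
  proof -
    fix l
    have "W $ i $ l * complex_of_real (d l) * cnj (W $ i $ l) = (W $ i $ l * cnj (W $ i $ l)) * complex_of_real (d l)"
      by (simp add: mult_ac)
    also have "\<dots> = complex_of_real ((cmod (W $ i $ l))^2 * d l)" by (simp only: cnorm of_real_mult)
    finally show "W $ i $ l * complex_of_real (d l) * cnj (W $ i $ l) = complex_of_real (wgt V U i l * d l)"
      by (simp add: W_def wgt_def)
  qed
  have "(\<Sum>l\<in>UNIV. W $ i $ l * complex_of_real (d l) * cnj (W $ i $ l)) = complex_of_real (\<Sum>l\<in>UNIV. wgt V U i l * d l)"
    by (simp only: t of_real_sum)
  finally show ?thesis .
qed

lemma wgt_rowsum:
  assumes U: "unitary U" and V: "unitary V"
  shows "(\<Sum>l\<in>UNIV. wgt V U i l) = 1"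
proof -
  have "adjoint_mat V ** (U ** rdiag (\<lambda>_. 1) ** adjoint_mat U) ** V = mat 1"
    using U V by (simp add: mat1_rdiag[symmetric] unitaryD)
  hence "(adjoint_mat V ** (U ** rdiag (\<lambda>_. 1) ** adjoint_mat U) ** V) $ i $ i = 1"
    by (simp add: mat_def)
  thus ?thesis unfolding diag_entry[OF U V] by (simp only: of_real_eq_1_iff mult_1_right)
qed

lemma wgt_le1:
  assumes U: "unitary U" and V: "unitary V"
  shows "wgt V U i l \<le> 1"
proof -
  have "wgt V U i l \<le> (\<Sum>l\<in>UNIV. wgt V U i l)"
    by (rule member_le_sum) (auto simp: wgt_nonneg)
  thus ?thesis using wgt_rowsum[OF U V] by simp
qed

lemma ln_ineq1:
  fixes a b :: real
  assumes "0 < a" "a \<le> 1" "0 < b" "b \<le> 1"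
  shows "(a - b)^2 \<le> (ln a - ln b) * (a - b)"
proof -
  have main: "(x - y)^2 \<le> (ln x - ln y) * (x - y)" if h: "0 < y" "y \<le> x" "x \<le> 1" for x y :: real
  proof -
    have x0: "0 < x" using h by linarith
    have "ln (y / x) \<le> y / x - 1" using h x0 by (intro ln_le_minus_one) auto
    hence "ln y - ln x \<le> y / x - 1" using h x0 by (simp add: ln_div)
    moreover have "y / x - 1 = - ((x - y) / x)" using x0 by (simp add: field_simps)
    ultimately have a1: "(x - y) / x \<le> ln x - ln y" by linarith
    have "(x - y) * x \<le> (x - y)" using h by (intro mult_left_le) auto
    hence "x - y \<le> (x - y) / x" using x0 by (simp add: le_divide_eq)
    hence "x - y \<le> ln x - ln y" using a1 by linarith
    hence "(x - y) * (x - y) \<le> (ln x - ln y) * (x - y)" using h by (intro mult_right_mono) auto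
    thus ?thesis by (simp add: power2_eq_square)
  qed
  show ?thesis
  proof (cases "b \<le> a")
    case True thus ?thesis using main assms by blast
  next
    case False
    hence "(b - a)^2 \<le> (ln b - ln a) * (b - a)" using main assms by simp
    moreover have "(b - a)^2 = (a - b)^2" by (rule power2_commute)
    moreover have "(ln b - ln a) * (b - a) = (ln a - ln b) * (a - b)" by (simp add: algebra_simps)
    ultimately show ?thesis by simp
  qed
qed

lemma ln_ineq2:
  fixes a b m :: real
  assumes "0 < m" "m \<le> a" "m \<le> b"
  shows "m * (ln a - ln b)^2 \<le> (ln a - ln b) * (a - b)"
proof -
  have main: "m * (ln x - ln y)^2 \<le> (ln x - ln y) * (x - y)" if h: "m \<le> y" "y \<le> x" for x y :: real
  proof -
    have y0: "0 < y" using h assms by linarith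
    have "ln (x / y) \<le> x / y - 1" using h y0 by (intro ln_le_minus_one) auto
    hence "ln x - ln y \<le> x / y - 1" using h y0 by (simp add: ln_div)
    hence a1: "y * (ln x - ln y) \<le> x - y" using y0 by (simp add: field_simps)
    have d0: "0 \<le> ln x - ln y" using h y0 by simp
    have "m * (ln x - ln y) \<le> y * (ln x - ln y)" using h d0 by (intro mult_right_mono) auto
    hence a2: "m * (ln x - ln y) \<le> x - y" using a1 by linarith
    have "(m * (ln x - ln y)) * (ln x - ln y) \<le> (x - y) * (ln x - ln y)"
      using a2 d0 by (intro mult_right_mono) auto
    thus ?thesis by (simp add: power2_eq_square mult_ac)
  qed
  show ?thesis
  proof (cases "b \<le> a")
    case True thus ?thesis using main assms by blast
  next
    case False
    hence "m * (ln b - ln a)^2 \<le> (ln b - ln a) * (b - a)" using main assms by simp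
    moreover have "(ln b - ln a)^2 = (ln a - ln b)^2" by (rule power2_commute)
    moreover have "(ln b - ln a) * (b - a) = (ln a - ln b) * (a - b)" by (simp add: algebra_simps)
    ultimately show ?thesis by simp
  qed
qed



lemma density_eigs:
  fixes \<rho> :: "'n::finite cmat"
  assumes d: "\<rho> \<in> density" and inv: "invertible \<rho>" and U: "unitary U"
    and rU: "\<rho> = U ** rdiag p ** adjoint_mat U"
  shows "\<And>i. p i > 0" and "(\<Sum>i\<in>UNIV. p i) = 1"
proof -
  have psd: "psd \<rho>" and tr: "trace \<rho> = 1" using d by (auto simp: density_def)
  have D: "adjoint_mat U ** \<rho> ** U = rdiag p"
    unfolding rU by (simp add: unitaryD[OF U] unitary_cancel[OF U] flip: matrix_mul_assoc)
  have rhoU: "\<rho> ** U = U ** rdiag p"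
    unfolding rU by (simp add: unitaryD[OF U] flip: matrix_mul_assoc)
  have ge: "p i \<ge> 0" for i
  proof -
    define x where "x = (\<chi> k. U $ k $ i)"
    have "(adjoint_mat U ** \<rho> ** U) $ i $ i = (\<Sum>l\<in>UNIV. \<Sum>k\<in>UNIV. cnj (x $ k) * \<rho> $ k $ l * x $ l)"
      by (simp add: mmult_nth sum_distrib_right x_def)
    also have "\<dots> = (\<Sum>k\<in>UNIV. \<Sum>l\<in>UNIV. cnj (x $ k) * \<rho> $ k $ l * x $ l)" by (rule sum.swap)
    finally have "Re ((adjoint_mat U ** \<rho> ** U) $ i $ i) \<ge> 0" using psd unfolding psd_def by simp
    thus ?thesis unfolding D by simp
  qed
  have ne: "p i \<noteq> 0" for i
  proof
    assume p0: "p i = 0"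
    obtain B where B: "B ** \<rho> = mat 1" using inv unfolding invertible_def by blast
    define M where "M = adjoint_mat U ** B ** U"
    have "M ** rdiag p = adjoint_mat U ** (B ** \<rho>) ** U"
      unfolding M_def by (simp add: rhoU flip: matrix_mul_assoc)
    also have "\<dots> = mat 1" using B by (simp add: unitaryD[OF U])
    finally have "(M ** rdiag p) $ i $ i = 1" by (simp add: mat_def)
    thus False using p0 by (simp add: rdiag_mult_right)
  qed
  show "\<And>i. p i > 0" using ge ne by (simp add: order_le_neq_trans)
  have "complex_of_real (\<Sum>i\<in>UNIV. p i) = 1" using tr trace_conj[OF U, of p] rU by simp
  thus "(\<Sum>i\<in>UNIV. p i) = 1" by (simp only: of_real_eq_1_iff)
qed

lemma mm_add_right: "((A::'n::finite cmat) + B) ** C = A ** C + B ** C"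
  by (simp add: vec_eq_iff mmult_nth distrib_right sum.distrib)

lemma trace_diff': "trace ((A::'n::finite cmat) - B) = trace A - trace B"
  by (simp add: trace_nth sum_subtractf)

lemma inner_mat1_mat1: "mat 1 \<bullet> (mat 1 :: 'n::finite cmat) = real CARD('n)"
  unfolding inner_mat1 by (simp add: trace_nth mat_def)

lemma inner_mat1_scaled: "mat 1 \<bullet> (c *\<^sub>R mat 1 :: 'n::finite cmat) = c * real CARD('n)"
  by (simp add: inner_mat1_mat1)

lemma step_bounds:
  fixes G :: "'n::finite cmat"
  assumes G: "hermitian G" and U: "unitary U" and p: "\<And>i. p i > 0" and psum: "(\<Sum>i\<in>UNIV. p i) = 1"
    and Q: "unitary Q" and GQ: "G = Q ** rdiag g ** adjoint_mat Q"
    and a0: "0 \<le> \<alpha>" and a1: "\<alpha> \<le> 1"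
    and rho: "\<rho> = U ** rdiag p ** adjoint_mat U" and sig: "\<sigma> = eg_step G \<rho> \<alpha>"
    and Bdef: "B = (\<Sum>l\<in>UNIV. \<bar>g l\<bar>)" and pmin: "pmin = Min (range p)"
    and mdef: "m = pmin * exp (- 2 * B) / real CARD('n)"
    and Pdef: "P = G - (Re (trace G) / real CARD('n)) *\<^sub>R mat 1"
  shows "hermitian \<sigma>" "(norm (\<sigma> - \<rho>))^2 \<le> - \<alpha> * (G \<bullet> (\<sigma> - \<rho>))"
    "m * \<alpha>^2 * (norm P)^2 \<le> - \<alpha> * (G \<bullet> (\<sigma> - \<rho>))"
    "mat 1 \<bullet> (\<sigma> - \<rho>) = 0"
proof -
  obtain V mu where V: "unitary V"
    and Ldef: "U ** rdiag (\<lambda>i. ln (p i)) ** adjoint_mat U - \<alpha> *\<^sub>R G = V ** rdiag mu ** adjoint_mat V"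
    and sform: "\<sigma> = V ** rdiag (\<lambda>i. exp (mu i) / (\<Sum>j\<in>UNIV. exp (mu j))) ** adjoint_mat V"
    using eg_step_form[OF G U, where p = p and \<alpha> = \<alpha>, OF p] sig rho by blast
  define Z where "Z = (\<Sum>j\<in>UNIV. exp (mu j))"
  define s where "s = (\<lambda>i. exp (mu i) / Z)"
  have sform': "\<sigma> = V ** rdiag s ** adjoint_mat V" using sform unfolding s_def Z_def by simp
  show "hermitian \<sigma>" unfolding sform' by (rule hermitian_conj)
  have Z0: "Z > 0" unfolding Z_def by (intro sum_pos) auto
  have s0: "s i > 0" for i unfolding s_def using Z0 by simp
  have ssum: "(\<Sum>i\<in>UNIV. s i) = 1" unfolding s_def using Z0 by (simp add: sum_divide_distrib[symmetric] Z_def)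
  have s1: "s i \<le> 1" for i
  proof -
    have "s i \<le> (\<Sum>i\<in>UNIV. s i)" by (rule member_le_sum) (auto simp: less_imp_le[OF s0])
    thus ?thesis using ssum by simp
  qed
  have p1: "p i \<le> 1" for i
  proof -
    have "p i \<le> (\<Sum>i\<in>UNIV. p i)" by (rule member_le_sum) (auto simp: less_imp_le[OF p])
    thus ?thesis using psum by simp
  qed
  have pmin_le: "pmin \<le> p i" for i unfolding pmin by (rule Min_le) auto
  have pmin0: "pmin > 0"
  proof -
    have "pmin \<in> range p" unfolding pmin by (rule Min_in) auto
    thus ?thesis using p by auto
  qed
  have B0: "B \<ge> 0" unfolding Bdef by (intro sum_nonneg) auto
  define S1 where "S1 = (\<lambda>i. \<Sum>l\<in>UNIV. wgt V U i l * ln (p l))"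
  define S2 where "S2 = (\<lambda>i. \<Sum>l\<in>UNIV. wgt V Q i l * g l)"
  have mu_eq: "mu i = S1 i - \<alpha> * S2 i" for i
  proof -
    have "adjoint_mat V ** (V ** rdiag mu ** adjoint_mat V) ** V = rdiag mu"
      by (simp add: unitaryD[OF V] unitary_cancel[OF V] flip: matrix_mul_assoc)
    hence "rdiag mu = adjoint_mat V ** (U ** rdiag (\<lambda>i. ln (p i)) ** adjoint_mat U) ** V
        - \<alpha> *\<^sub>R (adjoint_mat V ** (Q ** rdiag g ** adjoint_mat Q) ** V)"
      unfolding Ldef[symmetric] GQ[symmetric] by (simp add: mm_diff_left mm_diff_right mm_scaleR_left mm_scaleR_right)
    hence "rdiag mu $ i $ i = (adjoint_mat V ** (U ** rdiag (\<lambda>i. ln (p i)) ** adjoint_mat U) ** V) $ i $ i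
        - complex_of_real \<alpha> * (adjoint_mat V ** (Q ** rdiag g ** adjoint_mat Q) ** V) $ i $ i"
      by (simp add: sc_nth2 del: vector_scaleR_component)
    hence "complex_of_real (mu i) = complex_of_real (S1 i - \<alpha> * S2 i)"
      unfolding diag_entry[OF U V] diag_entry[OF Q V] S1_def S2_def by simp
    thus ?thesis by (simp only: of_real_eq_iff)
  qed
  have S1lo: "ln pmin \<le> S1 i" for i
  proof -
    have "(\<Sum>l\<in>UNIV. wgt V U i l * ln pmin) \<le> S1 i" unfolding S1_def
      by (intro sum_mono mult_left_mono) (auto simp: wgt_nonneg pmin0 pmin_le p)
    moreover have "(\<Sum>l\<in>UNIV. wgt V U i l * ln pmin) = ln pmin"
      by (simp add: sum_distrib_right[symmetric] wgt_rowsum[OF U V])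
    ultimately show ?thesis by simp
  qed
  have S1hi: "S1 i \<le> 0" for i unfolding S1_def
    by (intro sum_nonpos mult_nonneg_nonpos) (auto simp: wgt_nonneg p p1 less_imp_le)
  have S2b: "\<bar>S2 i\<bar> \<le> B" for i
  proof -
    have "\<bar>S2 i\<bar> \<le> (\<Sum>l\<in>UNIV. \<bar>wgt V Q i l * g l\<bar>)" unfolding S2_def by (rule sum_abs)
    also have "\<dots> \<le> (\<Sum>l\<in>UNIV. \<bar>g l\<bar>)"
    proof (intro sum_mono)
      fix l
      have "\<bar>wgt V Q i l * g l\<bar> = wgt V Q i l * \<bar>g l\<bar>" by (simp add: abs_mult wgt_nonneg)
      also have "\<dots> \<le> 1 * \<bar>g l\<bar>" by (intro mult_right_mono wgt_le1[OF Q V]) auto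
      finally show "\<bar>wgt V Q i l * g l\<bar> \<le> \<bar>g l\<bar>" by simp
    qed
    finally show ?thesis unfolding Bdef .
  qed
  have aS2: "\<bar>\<alpha> * S2 i\<bar> \<le> B" for i
  proof -
    have "\<bar>\<alpha> * S2 i\<bar> = \<alpha> * \<bar>S2 i\<bar>" using a0 by (simp add: abs_mult)
    also have "\<dots> \<le> 1 * B" using a0 a1 S2b[of i] B0 by (intro mult_mono) auto
    finally show ?thesis by simp
  qed
  have mulo: "ln pmin - B \<le> mu i" for i using mu_eq[of i] S1lo[of i] aS2[of i] by linarith
  have muhi: "mu i \<le> B" for i using mu_eq[of i] S1hi[of i] aS2[of i] by linarith
  have Zhi: "Z \<le> real CARD('n) * exp B"
  proof -
    have "Z \<le> (\<Sum>j\<in>(UNIV::'n set). exp B)" unfolding Z_def by (intro sum_mono) (simp add: muhi)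
    thus ?thesis by simp
  qed
  have cardpos: "real CARD('n) > 0" by simp
  have m0: "m > 0" unfolding mdef using pmin0 by simp
  have mle_s: "m \<le> s i" for i
  proof -
    have "exp (ln pmin - B) \<le> exp (mu i)" using mulo by simp
    hence e1: "pmin * exp (- B) \<le> exp (mu i)" using pmin0 by (simp add: exp_diff exp_minus field_simps)
    have "m = (pmin * exp (- B)) / (real CARD('n) * exp B)" unfolding mdef
      by (simp add: exp_minus field_simps power2_eq_square exp_add[symmetric])
    also have "\<dots> \<le> exp (mu i) / Z"
      using e1 Zhi Z0 pmin0 by (intro frac_le) auto
    finally show ?thesis unfolding s_def .
  qed
  have mle_p: "m \<le> p i" for i
  proof -
    have "exp (- 2 * B) / real CARD('n) \<le> 1"
    proof -
      have "exp (- 2 * B) \<le> 1" using B0 by simp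
      also have "1 \<le> real CARD('n)" by simp
      finally show ?thesis using cardpos by (simp add: divide_le_eq)
    qed
    moreover have "m = pmin * (exp (- 2 * B) / real CARD('n))" unfolding mdef by simp
    ultimately have "m \<le> pmin * 1" using pmin0 by (metis less_imp_le mult_left_mono)
    thus ?thesis using pmin_le[of i] by simp
  qed
  define Y where "Y = V ** rdiag (\<lambda>i. ln (s i)) ** adjoint_mat V - U ** rdiag (\<lambda>i. ln (p i)) ** adjoint_mat U"
  have rmu: "rdiag mu = rdiag (\<lambda>i. ln (s i)) + ln Z *\<^sub>R mat 1"
  proof -
    have "ln (s i) = mu i - ln Z" for i unfolding s_def using Z0 by (simp add: ln_div)
    thus ?thesis by (simp add: vec_eq_iff sc_nth2 mat_def del: vector_scaleR_component)
  qed
  have Vmu: "V ** rdiag mu ** adjoint_mat V = V ** rdiag (\<lambda>i. ln (s i)) ** adjoint_mat V + ln Z *\<^sub>R mat 1"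
    unfolding rmu matrix_add_ldistrib mm_add_right mm_scaleR_left mm_scaleR_right
    by (simp add: unitaryD[OF V])
  have aG: "\<alpha> *\<^sub>R G = - Y - ln Z *\<^sub>R mat 1"
    using Ldef unfolding Vmu Y_def by (simp add: algebra_simps)
  define D where "D = \<sigma> - \<rho>"
  have Dform: "D = V ** rdiag s ** adjoint_mat V - U ** rdiag p ** adjoint_mat U"
    unfolding D_def sform' rho ..
  have ID: "mat 1 \<bullet> D = 0"
  proof -
    have "mat 1 \<bullet> D = Re (trace \<sigma>) - Re (trace \<rho>)" unfolding inner_mat1 D_def trace_diff' by simp
    also have "\<dots> = 0" unfolding sform' rho trace_conj[OF V] trace_conj[OF U] ssum psum by simp
    finally show ?thesis .
  qed
  thus "mat 1 \<bullet> (\<sigma> - \<rho>) = 0" unfolding D_def .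
  have keyT: "- \<alpha> * (G \<bullet> D) = Y \<bullet> D"
  proof -
    have "\<alpha> * (G \<bullet> D) = (\<alpha> *\<^sub>R G) \<bullet> D" by simp
    also have "\<dots> = - (Y \<bullet> D) - ln Z * (mat 1 \<bullet> D)" unfolding aG by (simp add: inner_diff_left)
    finally show ?thesis using ID by simp
  qed
  have YD: "Y \<bullet> D = (\<Sum>i\<in>UNIV. \<Sum>j\<in>UNIV. wgt V U i j * ((ln (s i) - ln (p j)) * (s i - p j)))"
    unfolding Y_def Dform by (rule mixed_inner[OF U V])
  have DD: "D \<bullet> D = (\<Sum>i\<in>UNIV. \<Sum>j\<in>UNIV. wgt V U i j * ((s i - p j) * (s i - p j)))"
    unfolding Dform by (rule mixed_inner[OF U V])
  have YY: "Y \<bullet> Y = (\<Sum>i\<in>UNIV. \<Sum>j\<in>UNIV. wgt V U i j * ((ln (s i) - ln (p j)) * (ln (s i) - ln (p j))))"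
    unfolding Y_def by (rule mixed_inner[OF U V])
  have "D \<bullet> D \<le> Y \<bullet> D"
    unfolding DD YD
  proof (intro sum_mono mult_left_mono wgt_nonneg)
    fix i j
    show "(s i - p j) * (s i - p j) \<le> (ln (s i) - ln (p j)) * (s i - p j)"
      using ln_ineq1[OF s0 s1 p p1] by (simp add: power2_eq_square)
  qed
  thus "(norm (\<sigma> - \<rho>))^2 \<le> - \<alpha> * (G \<bullet> (\<sigma> - \<rho>))"
    using keyT unfolding D_def by (simp add: power2_norm_eq_inner)
  have mYY: "m * (Y \<bullet> Y) \<le> Y \<bullet> D"
    unfolding YY YD sum_distrib_left
  proof (intro sum_mono)
    fix i j
    have "m * ((ln (s i) - ln (p j)) * (ln (s i) - ln (p j))) \<le> (ln (s i) - ln (p j)) * (s i - p j)"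
      using ln_ineq2[OF m0 mle_s mle_p] by (simp add: power2_eq_square)
    hence "wgt V U i j * (m * ((ln (s i) - ln (p j)) * (ln (s i) - ln (p j)))) \<le> wgt V U i j * ((ln (s i) - ln (p j)) * (s i - p j))"
      by (intro mult_left_mono wgt_nonneg)
    thus "m * (wgt V U i j * ((ln (s i) - ln (p j)) * (ln (s i) - ln (p j)))) \<le> wgt V U i j * ((ln (s i) - ln (p j)) * (s i - p j))"
      by (simp add: mult_ac)
  qed
  have PI: "mat 1 \<bullet> P = 0"
  proof -
    have "mat 1 \<bullet> P = Re (trace G) - (Re (trace G) / real CARD('n)) * real CARD('n)"
      unfolding Pdef inner_diff_right inner_mat1_scaled by (simp add: inner_mat1)
    thus ?thesis using cardpos by simp
  qed
  have YPI: "Y = - (\<alpha> *\<^sub>R P + (ln Z + \<alpha> * (Re (trace G) / real CARD('n))) *\<^sub>R mat 1)"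
  proof -
    have h: "\<alpha> *\<^sub>R G + ln Z *\<^sub>R mat 1 = - Y" using aG by (simp add: algebra_simps)
    hence "Y = - (\<alpha> *\<^sub>R G + ln Z *\<^sub>R mat 1)" by (metis minus_minus)
    moreover have "\<alpha> *\<^sub>R P + (ln Z + \<alpha> * (Re (trace G) / real CARD('n))) *\<^sub>R mat 1 = \<alpha> *\<^sub>R G + ln Z *\<^sub>R mat 1"
      unfolding Pdef by (simp add: scaleR_diff_right scaleR_add_left)
    ultimately show ?thesis by simp
  qed
  have "\<alpha>^2 * (norm P)^2 \<le> Y \<bullet> Y"
  proof -
    define c where "c = ln Z + \<alpha> * (Re (trace G) / real CARD('n))"
    have "Y \<bullet> Y = \<alpha>^2 * (P \<bullet> P) + 2 * \<alpha> * c * (mat 1 \<bullet> P) + c^2 * (mat 1 \<bullet> (mat 1 :: 'n cmat))"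
      unfolding YPI c_def[symmetric]
      by (simp add: inner_add_left inner_add_right inner_commute power2_eq_square algebra_simps)
    also have "\<dots> = \<alpha>^2 * (P \<bullet> P) + c^2 * real CARD('n)" by (simp add: PI inner_mat1_mat1)
    also have "\<dots> \<ge> \<alpha>^2 * (P \<bullet> P)" by simp
    finally show ?thesis by (simp add: power2_norm_eq_inner)
  qed
  hence "m * (\<alpha>^2 * (norm P)^2) \<le> m * (Y \<bullet> Y)" using m0 by (intro mult_left_mono) auto
  thus "m * \<alpha>^2 * (norm P)^2 \<le> - \<alpha> * (G \<bullet> (\<sigma> - \<rho>))"
    using mYY keyT unfolding D_def by (simp add: mult.assoc)
qed

theorem proposition4:
  fixes f :: "'n::finite cmat \<Rightarrow> real"
    and grad :: "'n cmat \<Rightarrow> 'n cmat"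
    and \<tau> :: real
  assumes convex: "convex_on {A. hermitian A} f"
    and grad: "\<And>\<rho>. \<rho> \<in> density \<Longrightarrow> invertible \<rho> \<Longrightarrow>
                 hermitian (grad \<rho>) \<and>
                 (f has_derivative (\<lambda>H. Re (hs_inner (grad \<rho>) H))) (at \<rho> within {A. hermitian A})"
    and tau: "0 < \<tau>" "\<tau> < 1"
  shows "\<forall>\<rho>. \<rho> \<in> density \<and> invertible \<rho> \<longrightarrow>
           (\<exists>\<alpha>\<rho>>0. \<forall>\<alpha>\<in>{0..\<alpha>\<rho>}.
              f (eg_step (grad \<rho>) \<rho> \<alpha>) \<le> f \<rho> + \<tau> * Re (hs_inner (grad \<rho>) (eg_step (grad \<rho>) \<rho> \<alpha> - \<rho>)))"
proof (intro allI impI)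
  fix \<rho> :: "'n cmat"
  assume asm: "\<rho> \<in> density \<and> invertible \<rho>"
  hence d: "\<rho> \<in> density" and inv: "invertible \<rho>" by auto
  define G where "G = grad \<rho>"
  have HG: "hermitian G" and der: "(f has_derivative (\<lambda>H. G \<bullet> H)) (at \<rho> within {A. hermitian A})"
    using grad[OF d inv] unfolding G_def re_hs_inner by auto
  have Hr: "hermitian \<rho>" using d by (simp add: density_def psd_def)
  obtain U p where U: "unitary U" and rU: "\<rho> = U ** rdiag p ** adjoint_mat U"
    using spectral[OF Hr] by blast
  have p: "\<And>i. p i > 0" and psum: "(\<Sum>i\<in>UNIV. p i) = 1"
    using density_eigs[OF d inv U rU] by auto
  obtain Q g where Q: "unitary Q" and GQ: "G = Q ** rdiag g ** adjoint_mat Q"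
    using spectral[OF HG] by blast
  define B where "B = (\<Sum>l\<in>UNIV. \<bar>g l\<bar>)"
  define pmin where "pmin = Min (range p)"
  define m where "m = pmin * exp (- 2 * B) / real CARD('n)"
  define P where "P = G - (Re (trace G) / real CARD('n)) *\<^sub>R mat 1"
  have pmin0: "pmin > 0"
  proof -
    have "pmin \<in> range p" unfolding pmin_def by (rule Min_in) auto
    thus ?thesis using p by auto
  qed
  have m0: "m > 0" unfolding m_def using pmin0 by simp
  have SB: "hermitian (eg_step G \<rho> \<alpha>) \<and>
      (norm (eg_step G \<rho> \<alpha> - \<rho>))^2 \<le> - \<alpha> * (G \<bullet> (eg_step G \<rho> \<alpha> - \<rho>)) \<and>
      m * \<alpha>^2 * (norm P)^2 \<le> - \<alpha> * (G \<bullet> (eg_step G \<rho> \<alpha> - \<rho>)) \<and>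
      mat 1 \<bullet> (eg_step G \<rho> \<alpha> - \<rho>) = 0" if "0 \<le> \<alpha>" "\<alpha> \<le> 1" for \<alpha>
    using step_bounds[OF HG U _ psum Q GQ that rU refl B_def pmin_def m_def P_def] p by blast
  show "\<exists>\<alpha>\<rho>>0. \<forall>\<alpha>\<in>{0..\<alpha>\<rho>}.
              f (eg_step (grad \<rho>) \<rho> \<alpha>) \<le> f \<rho> + \<tau> * Re (hs_inner (grad \<rho>) (eg_step (grad \<rho>) \<rho> \<alpha> - \<rho>))"
    unfolding G_def[symmetric] re_hs_inner
  proof (cases "P = 0")
    case True
    show "\<exists>\<alpha>\<rho>>0. \<forall>\<alpha>\<in>{0..\<alpha>\<rho>}. f (eg_step G \<rho> \<alpha>) \<le> f \<rho> + \<tau> * (G \<bullet> (eg_step G \<rho> \<alpha> - \<rho>))"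
    proof (intro exI[of _ 1] conjI ballI)
      fix \<alpha> assume "\<alpha> \<in> {0..(1::real)}"
      hence a: "0 \<le> \<alpha>" "\<alpha> \<le> 1" by auto
      define D where "D = eg_step G \<rho> \<alpha> - \<rho>"
      have e: "G \<bullet> D = P \<bullet> D + (Re (trace G) / real CARD('n)) * (mat 1 \<bullet> D)"
        unfolding P_def by (simp add: inner_diff_left)
      have ID: "mat 1 \<bullet> D = 0" using SB[OF a] unfolding D_def by blast
      have "G \<bullet> D = 0" unfolding e using ID True by simp
      hence "(norm D)^2 \<le> 0" using SB[OF a] unfolding D_def by simp
      hence "D = 0" by simp
      hence "eg_step G \<rho> \<alpha> = \<rho>" unfolding D_def by simp
      thus "f (eg_step G \<rho> \<alpha>) \<le> f \<rho> + \<tau> * (G \<bullet> (eg_step G \<rho> \<alpha> - \<rho>))" by simp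
    qed simp
  next
    case False
    define eps where "eps = (1 - \<tau>) * sqrt m * norm P"
    have eps0: "eps > 0" unfolding eps_def using tau m0 False by simp
    obtain \<delta> where \<delta>0: "\<delta> > 0" and \<delta>: "\<And>y. y \<in> {A. hermitian A} \<Longrightarrow> norm (y - \<rho>) < \<delta> \<Longrightarrow>
        norm (f y - f \<rho> - G \<bullet> (y - \<rho>)) \<le> eps * norm (y - \<rho>)"
      using der eps0 unfolding has_derivative_within_alt by blast
    define a0 where "a0 = min 1 (\<delta> / (norm G + 1))"
    have "\<delta> / (norm G + 1) > 0" using \<delta>0 by (intro divide_pos_pos) (auto intro: add_nonneg_pos)
    hence a00: "a0 > 0" unfolding a0_def by simp
    show "\<exists>\<alpha>\<rho>>0. \<forall>\<alpha>\<in>{0..\<alpha>\<rho>}. f (eg_step G \<rho> \<alpha>) \<le> f \<rho> + \<tau> * (G \<bullet> (eg_step G \<rho> \<alpha> - \<rho>))"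
    proof (intro exI[of _ a0] conjI ballI)
      show "a0 > 0" by (rule a00)
    next
      fix \<alpha> assume "\<alpha> \<in> {0..a0}"
      hence a: "0 \<le> \<alpha>" "\<alpha> \<le> 1" and aa0: "\<alpha> \<le> a0" unfolding a0_def by auto
      define \<sigma> where "\<sigma> = eg_step G \<rho> \<alpha>"
      define D where "D = \<sigma> - \<rho>"
      have Hs: "hermitian \<sigma>" and h1: "(norm D)^2 \<le> - \<alpha> * (G \<bullet> D)"
        and h2: "m * \<alpha>^2 * (norm P)^2 \<le> - \<alpha> * (G \<bullet> D)"
        using SB[OF a] unfolding \<sigma>_def[symmetric] D_def[symmetric] by auto
      show "f (eg_step G \<rho> \<alpha>) \<le> f \<rho> + \<tau> * (G \<bullet> (eg_step G \<rho> \<alpha> - \<rho>))"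
      proof (cases "D = 0")
        case True
        hence "\<sigma> = \<rho>" unfolding D_def by simp
        thus ?thesis unfolding \<sigma>_def by simp
      next
        case False
        have nD: "norm D > 0" using False by simp
        have cs: "- (G \<bullet> D) \<le> norm G * norm D" using Cauchy_Schwarz_ineq2[of G D] by linarith
        have "\<alpha> * (- (G \<bullet> D)) \<le> \<alpha> * (norm G * norm D)"
          by (rule mult_left_mono[OF cs a(1)])
        hence "(norm D)^2 \<le> \<alpha> * (norm G * norm D)" using h1 by simp
        hence "norm D * norm D \<le> (\<alpha> * norm G) * norm D" by (simp add: power2_eq_square mult_ac)
        hence nDa: "norm D \<le> \<alpha> * norm G" using nD by simp
        have "\<alpha> * norm G \<le> (\<delta> / (norm G + 1)) * norm G"
          using aa0 unfolding a0_def by (intro mult_right_mono) auto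
        also have "\<dots> < \<delta>"
        proof -
          have "(\<delta> / (norm G + 1)) * norm G = \<delta> * (norm G / (norm G + 1))" by simp
          also have "\<dots> < \<delta> * 1"
          proof (intro mult_strict_left_mono \<delta>0)
            have "norm G < norm G + 1" by simp
            thus "norm G / (norm G + 1) < 1" by (subst divide_less_eq_1_pos) (auto intro: add_nonneg_pos)
          qed
          finally show ?thesis by simp
        qed
        finally have nDd: "norm D < \<delta>" using nDa by linarith
        have apos: "\<alpha> > 0"
        proof (rule ccontr)
          assume "\<not> \<alpha> > 0"
          hence "\<alpha> = 0" using a by simp
          hence "(norm D)^2 \<le> 0" using h1 by simp
          thus False using nD by simp
        qed
        define T where "T = - \<alpha> * (G \<bullet> D)"
        have T0: "T \<ge> 0" using h1 unfolding T_def by (smt (verit) zero_le_power2)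
        have "(norm D * (sqrt m * \<alpha> * norm P))^2 = (norm D)^2 * (m * \<alpha>^2 * (norm P)^2)"
          using m0 by (simp add: power_mult_distrib)
        also have "\<dots> \<le> T * T"
        proof (rule mult_mono)
          show "(norm D)^2 \<le> T" using h1 unfolding T_def .
          show "m * \<alpha>^2 * (norm P)^2 \<le> T" using h2 unfolding T_def .
          show "0 \<le> T" by (rule T0)
          show "0 \<le> m * \<alpha>^2 * (norm P)^2" using m0 by simp
        qed
        also have "\<dots> = T^2" by (simp add: power2_eq_square)
        finally have "(norm D * (sqrt m * \<alpha> * norm P))^2 \<le> T^2" .
        hence "norm D * (sqrt m * \<alpha> * norm P) \<le> T" by (rule power2_le_imp_le[OF _ T0])
        hence "\<alpha> * (sqrt m * norm P * norm D) \<le> \<alpha> * (- (G \<bullet> D))" unfolding T_def by (simp add: mult_ac)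
        hence key: "sqrt m * norm P * norm D \<le> - (G \<bullet> D)" by (rule mult_left_le_imp_le[OF _ apos])
        have "f \<sigma> - f \<rho> - G \<bullet> D \<le> eps * norm D"
          using \<delta>[of \<sigma>] Hs nDd unfolding D_def by auto
        also have "\<dots> = (1 - \<tau>) * (sqrt m * norm P * norm D)" unfolding eps_def by (simp add: mult_ac)
        also have "\<dots> \<le> (1 - \<tau>) * (- (G \<bullet> D))" using key tau by (intro mult_left_mono) auto
        finally have "f \<sigma> \<le> f \<rho> + \<tau> * (G \<bullet> D)" by (simp add: algebra_simps)
        thus ?thesis unfolding D_def \<sigma>_def .
      qed
    qed
  qed
qed


end
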